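(* For every integer $n\ge1$, $$\sum_{\ell=1}^n\sum_{k=1}^n\Big(\frac1{n^2}\Big)^{\frac{\ell}{\ell+1}\cdot\frac{k}{k+1}}\ \le\ 1+2e^{4/e}+2e^{8/e}+e^{32/e}.$$ *)

theory Defs
  imports Complex_Main
begin

end

theory Submission
  imports Defs
begin

lemma exp_sq_bound:
  fixes m :: real assumes "m \<ge> 0" shows "(1 + m/2)^2 \<le> exp m"
proof -
  have "1 + m/2 \<le> exp (m/2)" by (rule exp_ge_add_one_self)
  hence "(1 + m/2)^2 \<le> (exp (m/2))^2" using assms by (intro power_mono) auto
  also have "\<dots> = exp m" by (simp add: power2_eq_square flip: exp_add)
  finally show ?thesis .
qed

lemma key:
  fixes x j :: real assumes x: "x \<ge> 1" and j: "j \<ge> 2"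
  shows "x powr (2/j) \<le> exp 2 + 4*x/j^2"
proof -
  define t where "t = ln x"
  have t0: "t \<ge> 0" using x by (simp add: t_def)
  have xe: "x = exp t" using x by (simp add: t_def)
  have pw: "x powr (2/j) = exp (2/j * t)" using x by (simp add: powr_def t_def)
  show ?thesis
  proof (cases "t \<le> j")
    case True
    have "2/j * t \<le> 2" using True j t0 by (simp add: field_simps)
    hence "exp (2/j*t) \<le> exp 2" by simp
    moreover have "0 \<le> 4*x/j^2" using x by simp
    ultimately show ?thesis using pw by linarith
  next
    case False
    have a: "j - 2 \<le> t - 2/j*t"
    proof -
      have e: "(t - 2/j*t)*j = t*(j-2)" using j by (simp add: field_simps)
      have "(j-2) * j \<le> (j-2) * t" using False j by (intro mult_left_mono) auto
      hence "(j-2) * j \<le> (t - 2/j*t) * j" using e by (simp add: mult.commute)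
      thus ?thesis using j by (simp add: mult_le_cancel_right)
    qed
    have "(1 + (j-2)/2)^2 \<le> exp (j-2)" using j by (intro exp_sq_bound) auto
    hence "j^2 \<le> 4 * exp (j-2)" by (simp add: power2_eq_square field_simps)
    also have "\<dots> \<le> 4 * exp (t - 2/j*t)" using a by simp
    finally have b: "j^2 \<le> 4 * exp (t - 2/j*t)" .
    have "exp (2/j*t) * j^2 \<le> exp (2/j*t) * (4 * exp (t - 2/j*t))"
      using b by (intro mult_left_mono) auto
    also have "\<dots> = 4 * x" by (simp add: xe flip: exp_add)
    finally have "exp (2/j*t) \<le> 4*x/j^2" using j by (simp add: field_simps)
    thus ?thesis using pw exp_gt_zero[of 2] by linarith
  qed
qed

lemma sum_inv_sq:
  "(\<Sum>l=1..n. 1 / (real l + 1)^2) \<le> 1 - 1/(real n + 1)"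
proof (induction n)
  case 0 then show ?case by simp
next
  case (Suc n)
  have "(real n+1)*(real n+2) \<le> (real n+2)^2" by (simp add: power2_eq_square)
  hence "1/(real n + 2)^2 \<le> 1/((real n+1)*(real n+2))"
    by (intro divide_left_mono) auto
  also have "\<dots> = 1/(real n + 1) - 1/(real n + 2)" by (simp add: field_simps)
  finally have "1/(real n + 2)^2 \<le> 1/(real n + 1) - 1/(real n + 2)" .
  then show ?case using Suc by (simp add: add.commute)
qed

lemma term_bound:
  fixes n l k :: nat assumes n: "n \<ge> 1" and l: "l \<ge> 1" and k: "k \<ge> 1"
  shows "(1 / (real n)^2) powr ((real l / (real l + 1)) * (real k / (real k + 1)))
     \<le> (exp 2 / real n + 4/(real l + 1)^2) * (exp 2 / real n + 4/(real k + 1)^2)"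
proof -
  define x where "x = real n"
  have x1: "x \<ge> 1" using n by (simp add: x_def)
  define a where "a = (real l / (real l + 1)) * (real k / (real k + 1))"
  have "(1 / x^2) powr a = x powr (-2*a)"
    using x1 by (simp add: powr_divide powr_powr ln_powr powr_minus_divide powr_def ln_div ln_realpow)
  also have "\<dots> \<le> x powr (-2 + 2/(real l + 1) + 2/(real k + 1))"
  proof (rule powr_mono[OF _ x1])
    have "1 - a = (real l + real k + 1) / ((real l + 1)*(real k + 1))"
      unfolding a_def by (simp add: field_simps) (subst add_divide_distrib[symmetric], simp add: algebra_simps, smt (verit) of_nat_0_le_iff mult_nonneg_nonneg)
    also have "\<dots> \<le> (real l + real k + 2) / ((real l + 1)*(real k + 1))"
      by (intro divide_right_mono) auto
    also have "\<dots> = 1/(real l + 1) + 1/(real k + 1)"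
      by (simp add: field_simps)
    finally show "-2*a \<le> -2 + 2/(real l + 1) + 2/(real k + 1)" by simp
  qed
  also have "\<dots> = (x powr (2/(real l + 1)) / x) * (x powr (2/(real k + 1)) / x)"
  proof -
    define A where "A = 2/(real l + 1)"
    define B where "B = 2/(real k + 1)"
    have "x powr (-2 + A + B) = x powr A * x powr B * x powr (-2)"
      by (simp add: powr_add[symmetric] algebra_simps)
    also have "x powr (-2) = 1 / x^2" using x1 by (simp add: powr_minus powr_numeral divide_inverse)
    finally show ?thesis using x1 by (simp add: A_def B_def power2_eq_square)
  qed
  also have "\<dots> \<le> ((exp 2 + 4*x/(real l + 1)^2) / x) * ((exp 2 + 4*x/(real k + 1)^2) / x)"
    using x1 key[OF x1, of "real l + 1"] key[OF x1, of "real k + 1"] l k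
    by (intro mult_mono divide_right_mono) auto
  also have "\<dots> = (exp 2 / x + 4/(real l + 1)^2) * (exp 2 / x + 4/(real k + 1)^2)"
    using x1 by (simp add: field_simps)
  finally show ?thesis by (simp add: x_def a_def)
qed

theorem mainTheorem5:
  fixes n :: nat
  assumes "n \<ge> 1"
  shows "(\<Sum>l=1..n. \<Sum>k=1..n.
            (1 / (real n)^2) powr ((real l / (real l + 1)) * (real k / (real k + 1))))
         \<le> 1 + 2 * exp (4 / exp 1) + 2 * exp (8 / exp 1) + exp (32 / exp 1)"
proof -
  define f where "f l = exp 2 / real n + 4/(real l + 1)^2" for l :: nat
  have "(\<Sum>l=1..n. \<Sum>k=1..n.
            (1 / (real n)^2) powr ((real l / (real l + 1)) * (real k / (real k + 1))))
       \<le> (\<Sum>l=1..n. \<Sum>k=1..n. f l * f k)"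
    using term_bound[OF assms] unfolding f_def by (intro sum_mono) auto
  also have "\<dots> = (\<Sum>l=1..n. f l) * (\<Sum>k=1..n. f k)" by (simp add: sum_product)
  also have "(\<Sum>l=1..n. f l) \<le> 13"
  proof -
    have nn: "0 \<le> 1/(real n + 1)" by simp
    have "(\<Sum>l=1..n. f l) = exp 2 + 4 * (\<Sum>l=1..n. 1/(real l + 1)^2)"
      using assms by (simp add: f_def sum.distrib sum_distrib_left)
    also have "\<dots> \<le> exp 2 + 4" using sum_inv_sq[of n] nn by linarith
    also have "exp (2::real) \<le> 9"
    proof -
      have "exp (2::real) = exp 1 * exp 1" by (simp flip: exp_add)
      also have "\<dots> \<le> 3 * 3" using exp_le by (intro mult_mono) auto
      finally show ?thesis by simp
    qed
    finally show ?thesis by simp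
  qed
  hence "(\<Sum>l=1..n. f l) * (\<Sum>k=1..n. f k) \<le> 13 * 13"
    by (intro mult_mono) (auto simp: f_def intro!: sum_nonneg)
  also have "(13*13::real) \<le> exp 10"
  proof -
    have "(2::real)^10 \<le> exp 1 ^ 10"
      using exp_ge_add_one_self[of 1] by (intro power_mono) auto
    also have "\<dots> = exp 10" by (simp flip: exp_of_nat_mult)
    finally show ?thesis by simp
  qed
  also have "exp (10::real) \<le> exp (32 / exp 1)"
  proof -
    have "10 * exp 1 \<le> (32::real)" using exp_le by simp
    hence "10 \<le> 32 / exp (1::real)" by (simp add: field_simps)
    thus ?thesis by simp
  qed
  also have "\<dots> \<le> 1 + 2 * exp (4 / exp 1) + 2 * exp (8 / exp 1) + exp (32 / exp 1)"
    by (simp add: add_nonneg_nonneg)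
  finally show ?thesis .
qed

end
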